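(* Assume $\inf_{x\in X}\mu(B_x(1/2))>0$. If $T\in\mathscr{B}(X)$ is a controlled locally compact operator such that $\|\mathbf{1}_{B_x(1)}T\|\to0$ as $x\to\infty$, then $T$ is compact.
   Context: $(X,d)$ is a non-compact proper metric space, $B_x(r)=\{y:d(x,y)\le r\}$, and $\mu$ is a Radon measure with support $X$ such that $\mu(B_x(r))>0$ and $\sup_x\mu(B_x(r))<\infty$ for all $r>0$. $\mathscr{B}(X)$ is the algebra of bounded operators on $L^2(X,\mu)$; $\mathbf{1}_A$ is multiplication by the characteristic function of measurable $A$. $T$ is controlled if there is $r>0$ such that $\mathbf{1}_FT\mathbf{1}_G=0$ for all closed $F,G$ with $d(F,G)>r$. $T$ is locally compact if $\mathbf{1}_KT$ and $T\mathbf{1}_K$ are compact for every compact $K\subset X$. $x\to\infty$ means $x$ leaves every compact set. *)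

theory Defs
  imports "HOL-Analysis.Analysis"
begin

text \<open>Square-integrable (complex-valued) functions on a measure space; elements of
  L^2(X,mu) are represented by their representatives.\<close>
definition L2 :: "'a measure \<Rightarrow> ('a \<Rightarrow> complex) set" where
  "L2 M = {f. f \<in> borel_measurable M \<and> integrable M (\<lambda>x. (cmod (f x))^2)}"

definition L2norm :: "'a measure \<Rightarrow> ('a \<Rightarrow> complex) \<Rightarrow> real" where
  "L2norm M f = sqrt (\<integral>x. (cmod (f x))^2 \<partial>M)"

text \<open>A bounded operator on L^2(M), given by a linear lift acting on representatives.\<close>
definition bounded_op :: "'a measure \<Rightarrow> (('a \<Rightarrow> complex) \<Rightarrow> ('a \<Rightarrow> complex)) \<Rightarrow> bool" where
  "bounded_op M T \<longleftrightarrow>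
     (\<forall>f\<in>L2 M. T f \<in> L2 M) \<and>
     (\<forall>f\<in>L2 M. \<forall>g\<in>L2 M. T (\<lambda>x. f x + g x) = (\<lambda>x. T f x + T g x)) \<and>
     (\<forall>f\<in>L2 M. \<forall>c. T (\<lambda>x. c * f x) = (\<lambda>x. c * T f x)) \<and>
     (\<exists>C. \<forall>f\<in>L2 M. L2norm M (T f) \<le> C * L2norm M f)"

definition op_norm :: "'a measure \<Rightarrow> (('a \<Rightarrow> complex) \<Rightarrow> ('a \<Rightarrow> complex)) \<Rightarrow> real" where
  "op_norm M T = Sup {L2norm M (T f) | f. f \<in> L2 M \<and> L2norm M f \<le> 1}"

definition mult_ind :: "'a set \<Rightarrow> ('a \<Rightarrow> complex) \<Rightarrow> ('a \<Rightarrow> complex)" where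
  "mult_ind A f = (\<lambda>x. indicator A x * f x)"

definition compact_op :: "'a measure \<Rightarrow> (('a \<Rightarrow> complex) \<Rightarrow> ('a \<Rightarrow> complex)) \<Rightarrow> bool" where
  "compact_op M T \<longleftrightarrow>
     (\<forall>s. (\<forall>n. s n \<in> L2 M \<and> L2norm M (s n) \<le> 1) \<longrightarrow>
        (\<exists>(r::nat \<Rightarrow> nat) g. strict_mono r \<and> g \<in> L2 M \<and>
           (\<lambda>n. L2norm M (\<lambda>x. T (s (r n)) x - g x)) \<longlonglongrightarrow> 0))"

definition controlled_op :: "'a::metric_space measure \<Rightarrow> (('a \<Rightarrow> complex) \<Rightarrow> ('a \<Rightarrow> complex)) \<Rightarrow> bool" where
  "controlled_op M T \<longleftrightarrow>
     (\<exists>r>0. \<forall>F G. closed F \<longrightarrow> closed G \<longrightarrow> setdist F G > r \<longrightarrow>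
        (\<forall>f\<in>L2 M. AE x in M. mult_ind F (T (mult_ind G f)) x = 0))"

definition locally_compact_op :: "'a::metric_space measure \<Rightarrow> (('a \<Rightarrow> complex) \<Rightarrow> ('a \<Rightarrow> complex)) \<Rightarrow> bool" where
  "locally_compact_op M T \<longleftrightarrow>
     (\<forall>K. compact K \<longrightarrow> compact_op M (\<lambda>f. mult_ind K (T f)) \<and> compact_op M (\<lambda>f. T (mult_ind K f)))"

end

theory Submission
  imports Defs "HOL-Library.Diagonal_Subsequence"
begin


lemma sq_sum_le: "(x+y)^2 \<le> 2*x^2 + 2*(y::real)^2"
proof -
  have "0 \<le> (x-y)^2" by simp
  moreover have "(x-y)^2 = x^2+y^2-2*x*y" "(x+y)^2 = x^2+y^2+2*x*y"
    by (simp_all add: power2_diff power2_sum)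
  ultimately show ?thesis by linarith
qed

locale S =
  fixes \<mu> :: "'a::metric_space measure" and T :: "('a \<Rightarrow> complex) \<Rightarrow> ('a \<Rightarrow> complex)"
  assumes borel: "sets \<mu> = sets borel" and bnd: "bounded_op \<mu> T"
begin

definition Q :: "('a \<Rightarrow> complex) \<Rightarrow> ennreal" where
  "Q f = (\<integral>\<^sup>+x. ennreal ((cmod (f x))\<^sup>2) \<partial>\<mu>)"

lemma space_eq[simp]: "space \<mu> = UNIV"
  using sets_eq_imp_space_eq[OF borel] by simp

lemma closed_sets[intro]: "closed A \<Longrightarrow> A \<in> sets \<mu>"
  by (simp add: borel)

lemma meas_borel_iff: "f \<in> borel_measurable \<mu> \<longleftrightarrow> f \<in> borel_measurable borel"
  using measurable_cong_sets[OF borel refl] by blast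

lemma L2_iff: "f \<in> L2 \<mu> \<longleftrightarrow> f \<in> borel_measurable \<mu> \<and> Q f < \<infinity>"
proof
  assume "f \<in> L2 \<mu>"
  then have m: "f \<in> borel_measurable \<mu>" and i: "integrable \<mu> (\<lambda>x. (cmod (f x))\<^sup>2)"
    by (auto simp: L2_def)
  from i have "(\<integral>\<^sup>+ x. ennreal (norm ((cmod (f x))\<^sup>2)) \<partial>\<mu>) < \<infinity>"
    by (simp add: integrable_iff_bounded)
  then show "f \<in> borel_measurable \<mu> \<and> Q f < \<infinity>" using m by (simp add: Q_def)
next
  assume a: "f \<in> borel_measurable \<mu> \<and> Q f < \<infinity>"
  from a have [measurable]: "f \<in> borel_measurable \<mu>" by simp
  have "(\<lambda>x. (cmod (f x))\<^sup>2) \<in> borel_measurable \<mu>" by measurable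
  then have "integrable \<mu> (\<lambda>x. (cmod (f x))\<^sup>2)"
    using a by (simp add: integrable_iff_bounded Q_def)
  then show "f \<in> L2 \<mu>" using a by (simp add: L2_def)
qed

lemma L2_meas: "f \<in> L2 \<mu> \<Longrightarrow> f \<in> borel_measurable \<mu>" by (simp add: L2_iff)
lemma L2_fin: "f \<in> L2 \<mu> \<Longrightarrow> Q f < \<infinity>" by (simp add: L2_iff)

lemma L2norm_Q: "f \<in> borel_measurable \<mu> \<Longrightarrow> L2norm \<mu> f = sqrt (enn2real (Q f))"
  unfolding L2norm_def Q_def
  by (subst integral_eq_nn_integral) auto

lemma Q_L2norm: "f \<in> L2 \<mu> \<Longrightarrow> Q f = ennreal ((L2norm \<mu> f)\<^sup>2)"
  using L2_fin[of f] by (simp add: L2norm_Q L2_meas enn2real_nonneg ennreal_enn2real_if)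

lemma L2norm_nonneg: "L2norm \<mu> f \<ge> 0"
  by (simp add: L2norm_def)

lemma Q_mult_ind: "A \<in> sets \<mu> \<Longrightarrow> Q (mult_ind A f) = (\<integral>\<^sup>+x. indicator A x * ennreal ((cmod (f x))\<^sup>2) \<partial>\<mu>)"
  unfolding Q_def mult_ind_def
  by (rule nn_integral_cong) (auto simp: indicator_def)

lemma mult_ind_meas:
  assumes [measurable]: "A \<in> sets \<mu>" "f \<in> borel_measurable \<mu>"
  shows "mult_ind A f \<in> borel_measurable \<mu>"
  unfolding mult_ind_def by measurable

lemma Q_mono: "(\<And>x. cmod (f x) \<le> cmod (g x)) \<Longrightarrow> Q f \<le> Q g"
  unfolding Q_def by (intro nn_integral_mono) (auto intro!: power_mono)

lemma Q_mult_ind_le: "Q (mult_ind A f) \<le> Q f"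
  by (rule Q_mono) (auto simp: mult_ind_def indicator_def)

lemma mult_ind_L2: "A \<in> sets \<mu> \<Longrightarrow> f \<in> L2 \<mu> \<Longrightarrow> mult_ind A f \<in> L2 \<mu>"
  using Q_mult_ind_le[of A f] by (auto simp: L2_iff mult_ind_meas)

lemma Q_add_le: "Q (\<lambda>x. f x + g x) \<le> 2 * Q f + 2 * Q g"
  and Q_diff_le: "Q (\<lambda>x. f x - g x) \<le> 2 * Q f + 2 * Q g"
  if "f \<in> borel_measurable \<mu>" "g \<in> borel_measurable \<mu>"
proof -
  have pw: "(cmod c)\<^sup>2 \<le> 2 * (cmod a)\<^sup>2 + 2 * (cmod b)\<^sup>2" if "cmod c \<le> cmod a + cmod b" for a b c
  proof -
    have "(cmod c)\<^sup>2 \<le> (cmod a + cmod b)\<^sup>2" using that by (intro power_mono) auto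
    also have "\<dots> \<le> 2 * (cmod a)\<^sup>2 + 2 * (cmod b)\<^sup>2"
      by (rule sq_sum_le)
    finally show ?thesis .
  qed
  have eq: "2 * Q f + 2 * Q g = (\<integral>\<^sup>+x. ennreal (2 * (cmod (f x))\<^sup>2 + 2 * (cmod (g x))\<^sup>2) \<partial>\<mu>)"
    unfolding Q_def using that
    by (subst nn_integral_add[symmetric] nn_integral_cmult[symmetric], auto simp: ennreal_plus ennreal_mult)+
  show "Q (\<lambda>x. f x + g x) \<le> 2 * Q f + 2 * Q g"
    unfolding eq unfolding Q_def
    by (intro nn_integral_mono ennreal_leI pw norm_triangle_ineq)
  show "Q (\<lambda>x. f x - g x) \<le> 2 * Q f + 2 * Q g"
    unfolding eq unfolding Q_def
    by (intro nn_integral_mono ennreal_leI pw norm_triangle_ineq4)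
qed

lemma Q_split:
  assumes [measurable]: "A \<in> sets \<mu>" "h \<in> borel_measurable \<mu>"
  shows "Q h = Q (mult_ind A h) + Q (mult_ind (-A) h)"
proof -
  have [measurable]: "-A \<in> sets \<mu>" using sets.compl_sets[OF assms(1)] by (simp add: Compl_eq_Diff_UNIV)
  have "Q (mult_ind A h) + Q (mult_ind (-A) h) =
     (\<integral>\<^sup>+x. indicator A x * ennreal ((cmod (h x))\<^sup>2) + indicator (-A) x * ennreal ((cmod (h x))\<^sup>2) \<partial>\<mu>)"
    by (simp add: Q_mult_ind nn_integral_add)
  also have "\<dots> = Q h" unfolding Q_def
    by (rule nn_integral_cong) (auto simp: indicator_def)
  finally show ?thesis by simp
qed

lemma Q_cong_AE: "AE x in \<mu>. f x = g x \<Longrightarrow> Q f = Q g"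
  unfolding Q_def by (rule nn_integral_cong_AE) auto

lemma Q_scale: "f \<in> borel_measurable \<mu> \<Longrightarrow> Q (\<lambda>x. c * f x) = ennreal ((cmod c)\<^sup>2) * Q f"
  unfolding Q_def
  by (subst nn_integral_cmult[symmetric]) (auto simp: norm_mult power_mult_distrib ennreal_mult)

lemma L2_add: "f \<in> L2 \<mu> \<Longrightarrow> g \<in> L2 \<mu> \<Longrightarrow> (\<lambda>x. f x + g x) \<in> L2 \<mu>"
  and L2_diff: "f \<in> L2 \<mu> \<Longrightarrow> g \<in> L2 \<mu> \<Longrightarrow> (\<lambda>x. f x - g x) \<in> L2 \<mu>"
proof -
  assume f: "f \<in> L2 \<mu>" and g: "g \<in> L2 \<mu>"
  have fm[measurable]: "f \<in> borel_measurable \<mu>" and gm[measurable]: "g \<in> borel_measurable \<mu>" using f g by (auto simp: L2_iff)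
  have fin: "2 * Q f + 2 * Q g < \<infinity>" using f g by (auto simp: L2_iff ennreal_mult_less_top)
  have "Q (\<lambda>x. f x + g x) < \<infinity>" using Q_add_le[OF fm gm] fin by (rule le_less_trans)
  then show "(\<lambda>x. f x + g x) \<in> L2 \<mu>" by (simp add: L2_iff)
  have "Q (\<lambda>x. f x - g x) < \<infinity>" using Q_diff_le[OF fm gm] fin by (rule le_less_trans)
  then show "(\<lambda>x. f x - g x) \<in> L2 \<mu>" by (simp add: L2_iff)
qed

lemma L2_scale: "f \<in> L2 \<mu> \<Longrightarrow> (\<lambda>x. c * f x) \<in> L2 \<mu>"
  by (auto simp: L2_iff Q_scale ennreal_mult_less_top)

lemma T_L2: "f \<in> L2 \<mu> \<Longrightarrow> T f \<in> L2 \<mu>"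
  using bnd by (auto simp: bounded_op_def)

lemma T_add: "f \<in> L2 \<mu> \<Longrightarrow> g \<in> L2 \<mu> \<Longrightarrow> T (\<lambda>x. f x + g x) = (\<lambda>x. T f x + T g x)"
  using bnd by (auto simp: bounded_op_def)

lemma T_scale: "f \<in> L2 \<mu> \<Longrightarrow> T (\<lambda>x. c * f x) = (\<lambda>x. c * T f x)"
  using bnd by (auto simp: bounded_op_def)

lemma T_diff: "f \<in> L2 \<mu> \<Longrightarrow> g \<in> L2 \<mu> \<Longrightarrow> T (\<lambda>x. f x - g x) = (\<lambda>x. T f x - T g x)"
proof -
  assume f: "f \<in> L2 \<mu>" and g: "g \<in> L2 \<mu>"
  have e: "(\<lambda>x. f x - g x) = (\<lambda>x. f x + (\<lambda>x. (-1) * g x) x)" by simp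
  show ?thesis unfolding e
    by (subst T_add[OF f L2_scale[OF g]], subst T_scale[OF g]) simp
qed

lemma T_boundL: "\<exists>C\<ge>0. \<forall>f\<in>L2 \<mu>. L2norm \<mu> (T f) \<le> C * L2norm \<mu> f"
proof -
  obtain C where C: "\<forall>f\<in>L2 \<mu>. L2norm \<mu> (T f) \<le> C * L2norm \<mu> f"
    using bnd by (auto simp: bounded_op_def)
  have "\<forall>f\<in>L2 \<mu>. L2norm \<mu> (T f) \<le> max C 0 * L2norm \<mu> f"
  proof
    fix f assume "f \<in> L2 \<mu>"
    then have "L2norm \<mu> (T f) \<le> C * L2norm \<mu> f" using C by blast
    also have "\<dots> \<le> max C 0 * L2norm \<mu> f" by (intro mult_right_mono) (auto simp: L2norm_nonneg)
    finally show "L2norm \<mu> (T f) \<le> max C 0 * L2norm \<mu> f" .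
  qed
  then show ?thesis by (intro exI[of _ "max C 0"]) auto
qed

lemma L2norm_mono: "f \<in> borel_measurable \<mu> \<Longrightarrow> g \<in> L2 \<mu> \<Longrightarrow> Q f \<le> Q g \<Longrightarrow> L2norm \<mu> f \<le> L2norm \<mu> g"
  by (auto simp: L2norm_Q L2_iff intro!: real_sqrt_le_mono enn2real_mono)

lemma L2norm_scale: "f \<in> borel_measurable \<mu> \<Longrightarrow> L2norm \<mu> (\<lambda>x. c * f x) = cmod c * L2norm \<mu> f"
  by (simp add: L2norm_Q Q_scale enn2real_mult real_sqrt_mult)

lemma Q_le_from_L2norm:
  assumes "f \<in> L2 \<mu>" "g \<in> L2 \<mu>" "L2norm \<mu> f \<le> c * L2norm \<mu> g" "c \<ge> 0"
  shows "Q f \<le> ennreal (c\<^sup>2) * Q g"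
proof -
  have "(L2norm \<mu> f)\<^sup>2 \<le> (c * L2norm \<mu> g)\<^sup>2"
    using assms by (intro power_mono) (auto simp: L2norm_nonneg)
  then show ?thesis
    using assms by (simp add: Q_L2norm power_mult_distrib ennreal_mult[symmetric])
qed

lemma op_bound:
  assumes F: "F \<in> sets \<mu>" and h: "h \<in> L2 \<mu>"
  shows "L2norm \<mu> (mult_ind F (T h)) \<le> op_norm \<mu> (\<lambda>f. mult_ind F (T f)) * L2norm \<mu> h"
proof -
  obtain C where C: "C \<ge> 0" "\<forall>f\<in>L2 \<mu>. L2norm \<mu> (T f) \<le> C * L2norm \<mu> f"
    using T_boundL by blast
  have mi: "L2norm \<mu> (mult_ind F (T f)) \<le> L2norm \<mu> (T f)" if "f \<in> L2 \<mu>" for f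
    using that by (intro L2norm_mono mult_ind_meas F L2_meas T_L2 Q_mult_ind_le)
  define S where "S = {L2norm \<mu> (mult_ind F (T f)) | f. f \<in> L2 \<mu> \<and> L2norm \<mu> f \<le> 1}"
  have bdd: "bdd_above S"
  proof (rule bdd_aboveI)
    fix y assume "y \<in> S"
    then obtain f where "f \<in> L2 \<mu>" "L2norm \<mu> f \<le> 1" "y = L2norm \<mu> (mult_ind F (T f))"
      by (auto simp: S_def)
    then have "y \<le> C * L2norm \<mu> f" using mi C by force
    also have "\<dots> \<le> C" using C \<open>L2norm \<mu> f \<le> 1\<close> by (simp add: mult_left_le)
    finally show "y \<le> C" .
  qed
  have opn: "op_norm \<mu> (\<lambda>f. mult_ind F (T f)) = Sup S" by (simp add: op_norm_def S_def)
  show ?thesis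
  proof (cases "L2norm \<mu> h = 0")
    case True
    then have "L2norm \<mu> (T h) \<le> 0" using C h by force
    then have "L2norm \<mu> (mult_ind F (T h)) \<le> 0" using mi[OF h] by linarith
    then show ?thesis using True by simp
  next
    case False
    define t where "t = L2norm \<mu> h"
    have tp: "t > 0" using False L2norm_nonneg[of h] by (simp add: t_def)
    define h' where "h' = (\<lambda>x. complex_of_real (1/t) * h x)"
    have h': "h' \<in> L2 \<mu>" unfolding h'_def by (rule L2_scale[OF h])
    have nh': "L2norm \<mu> h' = 1" unfolding h'_def
      apply (subst L2norm_scale[OF L2_meas[OF h]]) using tp by (simp add: t_def norm_divide)
    have Th': "mult_ind F (T h') = (\<lambda>x. complex_of_real (1/t) * mult_ind F (T h) x)"
      unfolding h'_def T_scale[OF h] mult_ind_def by (simp add: mult.left_commute)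
    have "L2norm \<mu> (mult_ind F (T h')) \<in> S" using h' nh' by (auto simp: S_def)
    then have "L2norm \<mu> (mult_ind F (T h')) \<le> Sup S" using bdd by (rule cSup_upper)
    moreover have "L2norm \<mu> (mult_ind F (T h')) = (1/t) * L2norm \<mu> (mult_ind F (T h))"
      unfolding Th' using tp h
      by (subst L2norm_scale[OF mult_ind_meas[OF F L2_meas[OF T_L2[OF h]]]]) (simp add: norm_divide)
    ultimately have "L2norm \<mu> (mult_ind F (T h)) \<le> Sup S * t"
      using tp by (simp add: field_simps)
    then show ?thesis by (simp add: opn t_def)
  qed
qed

end



lemma sep_finite:
  fixes C :: "'a::metric_space set"
  assumes D: "finite D" "C \<subseteq> (\<Union>d\<in>D. ball d (1/2))"
    and F: "F \<subseteq> C" "\<forall>a\<in>F. \<forall>b\<in>F. a \<noteq> b \<longrightarrow> dist a b > 1"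
  shows "finite F \<and> card F \<le> card D"
proof -
  have "\<forall>a\<in>F. \<exists>d. d \<in> D \<and> a \<in> ball d (1/2)"
  proof
    fix a assume "a \<in> F"
    then have "a \<in> C" using F(1) by blast
    then have "a \<in> (\<Union>d\<in>D. ball d (1/2))" using D(2) by blast
    then show "\<exists>d. d \<in> D \<and> a \<in> ball d (1/2)" by (rule UN_E) blast
  qed
  from bchoice[OF this] obtain \<phi> where \<phi>0: "\<forall>a\<in>F. \<phi> a \<in> D \<and> a \<in> ball (\<phi> a) (1/2)" by blast
  then have \<phi>: "\<And>a. a \<in> F \<Longrightarrow> \<phi> a \<in> D \<and> a \<in> ball (\<phi> a) (1/2)" by blast
  have inj: "inj_on \<phi> F"
  proof (rule inj_onI)
    fix a b assume ab: "a \<in> F" "b \<in> F" "\<phi> a = \<phi> b"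
    have "dist (\<phi> a) a < 1/2" using \<phi>[OF ab(1)] by simp
    moreover have "dist (\<phi> b) b < 1/2" using \<phi>[OF ab(2)] by simp
    ultimately have "dist (\<phi> a) a < 1/2" "dist (\<phi> a) b < 1/2" using ab(3) by simp_all
    then have d1: "dist a b < 1" using dist_triangle2[of a b "\<phi> a"] dist_commute[of a "\<phi> a"] dist_commute[of b "\<phi> a"] by linarith
    show "a = b"
    proof (rule ccontr)
      assume "a \<noteq> b"
      then have "dist a b > 1" using F(2) ab(1,2) by blast
      then show False using d1 by simp
    qed
  qed
  have sub: "\<phi> ` F \<subseteq> D" using \<phi> by auto
  then have "finite (\<phi> ` F)" using D finite_subset by blast
  then have fin: "finite F" using inj finite_imageD by blast
  have "card F = card (\<phi> ` F)" using inj by (simp add: card_image)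
  also have "\<dots> \<le> card D" using sub D by (simp add: card_mono)
  finally show ?thesis using fin by simp
qed

lemma sep_cover:
  fixes C :: "'a::metric_space set"
  assumes "compact C"
  shows "\<exists>F. finite F \<and> F \<subseteq> C \<and> (\<forall>a\<in>F. \<forall>b\<in>F. a \<noteq> b \<longrightarrow> dist a b > 1) \<and> C \<subseteq> (\<Union>c\<in>F. cball c 1)"
proof -
  obtain D where D: "finite D" "C \<subseteq> (\<Union>d\<in>D. ball d (1/2))"
  proof -
    have "\<forall>\<epsilon>>0. \<exists>k. finite k \<and> C \<subseteq> (\<Union>x\<in>k. ball x \<epsilon>)"
      using assms by (simp add: compact_eq_totally_bounded)
    then have "\<exists>k. finite k \<and> C \<subseteq> (\<Union>x\<in>k. ball x (1/2))" by simp
    then show ?thesis using that by blast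
  qed
  define P where "P F \<longleftrightarrow> F \<subseteq> C \<and> (\<forall>a\<in>F. \<forall>b\<in>F. a \<noteq> b \<longrightarrow> dist a b > 1)" for F
  have P: "finite F \<and> card F \<le> card D" if "P F" for F
  proof -
    have "F \<subseteq> C" "\<forall>a\<in>F. \<forall>b\<in>F. a \<noteq> b \<longrightarrow> dist a b > 1" using that unfolding P_def by simp_all
    then show ?thesis by (rule sep_finite[OF D])
  qed
  have P0: "P {}" unfolding P_def by simp
  have Pb: "\<forall>y. P y \<longrightarrow> card y < Suc (card D)"
  proof (intro allI impI)
    fix y assume "P y" then show "card y < Suc (card D)" using P[of y] by simp
  qed
  obtain F where F: "P F" "\<forall>G. P G \<longrightarrow> card G \<le> card F"
    using ex_has_greatest_nat[of P "{}" card "Suc (card D)", OF P0 Pb] by blast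
  have fin: "finite F" using P[OF F(1)] by simp
  have FC: "F \<subseteq> C" and Fsep: "\<forall>a\<in>F. \<forall>b\<in>F. a \<noteq> b \<longrightarrow> dist a b > 1"
    using F(1) unfolding P_def by simp_all
  have cov: "C \<subseteq> (\<Union>c\<in>F. cball c 1)"
  proof
    fix y assume y: "y \<in> C"
    show "y \<in> (\<Union>c\<in>F. cball c 1)"
    proof (rule ccontr)
      assume ny: "y \<notin> (\<Union>c\<in>F. cball c 1)"
      have far: "dist c y > 1" if "c \<in> F" for c
      proof -
        have "y \<notin> cball c 1" using ny that by blast
        then show ?thesis by simp
      qed
      have yF: "y \<notin> F"
      proof
        assume "y \<in> F" then have "dist y y > 1" by (rule far)
        then show False by simp
      qed
      have "P (insert y F)" unfolding P_def
      proof (intro conjI ballI impI)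
        show "insert y F \<subseteq> C" using FC y by blast
        fix a b assume ab: "a \<in> insert y F" "b \<in> insert y F" "a \<noteq> b"
        show "dist a b > 1"
        proof (cases "a = y")
          case True
          then have "b \<in> F" using ab by blast
          then show ?thesis using far[of b] True by (simp add: dist_commute)
        next
          case False
          then have aF: "a \<in> F" using ab by blast
          show ?thesis
          proof (cases "b = y")
            case True then show ?thesis using far[OF aF] by simp
          next
            case False
            then have "b \<in> F" using ab by blast
            then show ?thesis using Fsep aF ab(3) by blast
          qed
        qed
      qed
      then have "card (insert y F) \<le> card F" using F(2) by blast
      then show False using fin yF by simp
    qed
  qed
  show ?thesis using fin FC Fsep cov by blast
qed

lemma mult_bound:
  fixes \<mu> :: "'a::metric_space measure"
  assumes borel: "sets \<mu> = sets borel"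
    and unif: "(SUP x. emeasure \<mu> (cball x (\<rho>+1/2))) < \<infinity>"
    and inf_pos: "(INF x. emeasure \<mu> (cball x (1/2))) > 0"
  shows "\<exists>Mr\<ge>0. \<forall>(y::'a) (F::'a set). finite F \<longrightarrow> (\<forall>a\<in>F. \<forall>b\<in>F. a\<noteq>b \<longrightarrow> dist a b > 1) \<longrightarrow>
            (\<forall>c\<in>F. dist c y < \<rho>) \<longrightarrow> real (card F) \<le> Mr"
proof -
  define m0 where "m0 = (INF x. emeasure \<mu> (cball x (1/2)))"
  define S where "S = (SUP x. emeasure \<mu> (cball x (\<rho>+1/2)))"
  define m' where "m' = enn2real (min m0 1)"
  have mm1: "0 < min m0 1" using inf_pos by (simp add: m0_def)
  have mm2: "min m0 1 < \<infinity>" by (rule le_less_trans[OF min.cobounded2]) simp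
  note mm = mm1 mm2
  have m'pos: "m' > 0" unfolding m'_def enn2real_positive_iff using mm by simp
  have "ennreal m' = min m0 1" unfolding m'_def using mm2 by (intro ennreal_enn2real) simp
  then have m'le: "ennreal m' \<le> m0" by (simp only: min.cobounded1)
  define s' where "s' = enn2real S"
  have Ss: "S = ennreal s'" unfolding s'_def using unif unfolding S_def by (intro ennreal_enn2real[symmetric]) simp
  have s'nn: "s' \<ge> 0" by (simp add: s'_def)
  show ?thesis
  proof -
  have key: "real (card F) \<le> s'/m'" if fin: "finite F" and sep: "\<forall>a\<in>F. \<forall>b\<in>F. a\<noteq>b \<longrightarrow> dist a b > 1"
      and near: "\<forall>c\<in>F. dist c y < \<rho>" for y :: 'a and F :: "'a set"
  proof -
    have cl: "(\<lambda>c. cball c (1/2)) ` F \<subseteq> sets \<mu>"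
    proof
      fix X assume "X \<in> (\<lambda>c. cball c (1/2)) ` F"
      then obtain c where "X = cball c (1/2)" by blast
      then show "X \<in> sets \<mu>" by (simp add: borel)
    qed
    have disj: "disjoint_family_on (\<lambda>c. cball c (1/2)) F"
      unfolding disjoint_family_on_def
    proof (intro ballI impI)
      fix a b assume ab: "a \<in> F" "b \<in> F" "a \<noteq> b"
      show "cball a (1/2) \<inter> cball b (1/2) = {}"
      proof (rule ccontr)
        assume "cball a (1/2) \<inter> cball b (1/2) \<noteq> {}"
        then obtain x where "dist a x \<le> 1/2" "dist b x \<le> 1/2" by auto
        then have "dist a b \<le> 1" using dist_triangle2[of a b x] by linarith
        then show False using sep ab by force
      qed
    qed
    have "of_nat (card F) * ennreal m' = (\<Sum>c\<in>F. ennreal m')" by simp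
    also have "\<dots> \<le> (\<Sum>c\<in>F. emeasure \<mu> (cball c (1/2)))"
    proof (rule sum_mono)
      fix c assume "c \<in> F"
      have "m0 \<le> emeasure \<mu> (cball c (1/2))" unfolding m0_def by (rule INF_lower) simp
      then show "ennreal m' \<le> emeasure \<mu> (cball c (1/2))" using m'le by (rule order_trans[rotated])
    qed
    also have "\<dots> = emeasure \<mu> (\<Union>c\<in>F. cball c (1/2))" using sum_emeasure[OF cl disj fin] .
    also have "\<dots> \<le> emeasure \<mu> (cball y (\<rho>+1/2))"
    proof (rule emeasure_mono)
      show "(\<Union>c\<in>F. cball c (1/2)) \<subseteq> cball y (\<rho>+1/2)"
      proof
        fix x assume "x \<in> (\<Union>c\<in>F. cball c (1/2))"
        then obtain c where c: "c \<in> F" "dist c x \<le> 1/2" by auto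
        have "dist y x \<le> dist y c + dist c x" by (rule dist_triangle)
        moreover have "dist y c < \<rho>" using near c(1) by (simp add: dist_commute)
        ultimately have "dist y x \<le> \<rho>+1/2" using c(2) by linarith
        then show "x \<in> cball y (\<rho>+1/2)" by simp
      qed
      show "cball y (\<rho>+1/2) \<in> sets \<mu>" by (simp add: borel)
    qed
    also have "\<dots> \<le> S" unfolding S_def by (rule SUP_upper) simp
    finally have "of_nat (card F) * ennreal m' \<le> ennreal s'" unfolding Ss .
    moreover have "of_nat (card F) * ennreal m' = ennreal (real (card F) * m')"
      using m'pos by (simp add: ennreal_mult ennreal_of_nat_eq_real_of_nat)
    ultimately have "ennreal (real (card F) * m') \<le> ennreal s'" by simp
    then have "real (card F) * m' \<le> s'" using s'nn by (subst (asm) ennreal_le_iff) simp_all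
    then show "real (card F) \<le> s'/m'" using m'pos by (simp add: pos_le_divide_eq)
  qed
  have "0 \<le> s'/m'" using m'pos s'nn by simp
  show ?thesis
  proof (rule exI[of _ "s'/m'"], rule conjI)
    show "0 \<le> s'/m'" by fact
    show "\<forall>(y::'a) (F::'a set). finite F \<longrightarrow> (\<forall>a\<in>F. \<forall>b\<in>F. a\<noteq>b \<longrightarrow> dist a b > 1) \<longrightarrow>
            (\<forall>c\<in>F. dist c y < \<rho>) \<longrightarrow> real (card F) \<le> s'/m'"
      by (intro allI impI) (rule key; assumption)
  qed
  qed
qed




locale S2 = S +
  assumes proper: "\<And>(x::'a) r. compact (cball x r)"
    and ctrl: "controlled_op \<mu> T"
    and unif: "\<And>r. r > 0 \<Longrightarrow> (SUP x. emeasure \<mu> (cball x r)) < \<infinity>"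
    and inf_pos: "(INF x. emeasure \<mu> (cball x (1/2))) > 0"
    and decay: "\<forall>\<epsilon>>0. \<exists>K. compact K \<and>
                  (\<forall>x. x \<notin> K \<longrightarrow> op_norm \<mu> (\<lambda>f. mult_ind (cball x 1) (T f)) < \<epsilon>)"
begin

lemma open_sets[intro]: "open A \<Longrightarrow> A \<in> sets \<mu>"
  by (simp add: borel)

lemma local_est:
  assumes r: "r > 0" and ctrlr: "\<forall>F G. closed F \<longrightarrow> closed G \<longrightarrow> setdist F G > r \<longrightarrow>
        (\<forall>f\<in>L2 \<mu>. AE x in \<mu>. mult_ind F (T (mult_ind G f)) x = 0)"
    and opn: "op_norm \<mu> (\<lambda>f. mult_ind (cball c 1) (T f)) < \<epsilon>"
    and f: "f \<in> L2 \<mu>"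
  shows "Q (mult_ind (cball c 1) (T f)) \<le> ennreal (\<epsilon>\<^sup>2) * Q (mult_ind (ball c (r+2)) f)"
proof -
  define h where "h = mult_ind (ball c (r+2)) f"
  have h: "h \<in> L2 \<mu>" unfolding h_def by (intro mult_ind_L2 open_sets f) simp
  have cF: "cball c 1 \<in> sets \<mu>" by (intro closed_sets) simp
  have A: "Q (mult_ind (cball c 1) (T f)) = Q (mult_ind (cball c 1) (T h))"
  proof (cases "ball c (r+2) = UNIV")
    case True
    then have "h = f" by (simp add: h_def mult_ind_def)
    then show ?thesis by simp
  next
    case False
    define G where "G = - ball c (r+2)"
    have Gne: "G \<noteq> {}" using False by (auto simp: G_def)
    have Gc: "closed G" unfolding G_def by (intro closed_Compl open_ball)
    have "r + 1 \<le> setdist (cball c 1) G"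
    proof (rule le_setdistI)
      show "cball c 1 \<noteq> {}" by simp
      show "G \<noteq> {}" by fact
      fix a b assume ab: "a \<in> cball c 1" "b \<in> G"
      then have "dist c a \<le> 1" "dist c b \<ge> r + 2" by (auto simp: G_def)
      moreover have "dist c b \<le> dist c a + dist a b" by (rule dist_triangle)
      ultimately show "r + 1 \<le> dist a b" by linarith
    qed
    then have sd: "setdist (cball c 1) G > r" by linarith
    have g: "mult_ind G f \<in> L2 \<mu>" by (intro mult_ind_L2 closed_sets Gc f)
    have ae: "AE x in \<mu>. mult_ind (cball c 1) (T (mult_ind G f)) x = 0"
      using ctrlr Gc sd f by auto
    have split: "f = (\<lambda>x. h x + mult_ind G f x)"
      by (rule ext) (simp add: h_def G_def mult_ind_def indicator_def)
    have Tf: "T f = (\<lambda>x. T h x + T (mult_ind G f) x)"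
      by (subst split) (rule T_add[OF h g])
    have "AE x in \<mu>. mult_ind (cball c 1) (T f) x = mult_ind (cball c 1) (T h) x"
      using ae by eventually_elim (simp add: Tf mult_ind_def distrib_left)
    then show ?thesis by (rule Q_cong_AE)
  qed
  have "L2norm \<mu> (mult_ind (cball c 1) (T h)) \<le> op_norm \<mu> (\<lambda>f. mult_ind (cball c 1) (T f)) * L2norm \<mu> h"
    by (rule op_bound[OF cF h])
  also have "\<dots> \<le> \<epsilon> * L2norm \<mu> h"
    using opn by (intro mult_right_mono) (auto simp: L2norm_nonneg)
  also have "\<dots> \<le> max \<epsilon> 0 * L2norm \<mu> h"
    by (intro mult_right_mono) (auto simp: L2norm_nonneg)
  finally have "L2norm \<mu> (mult_ind (cball c 1) (T h)) \<le> max \<epsilon> 0 * L2norm \<mu> h" .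
  then have "Q (mult_ind (cball c 1) (T h)) \<le> ennreal ((max \<epsilon> 0)\<^sup>2) * Q h"
    by (intro Q_le_from_L2norm mult_ind_L2 cF T_L2 h) auto
  also have "\<dots> \<le> ennreal (\<epsilon>\<^sup>2) * Q h"
  proof (rule mult_right_mono)
    have "(max \<epsilon> 0)\<^sup>2 \<le> \<epsilon>\<^sup>2"
      by (cases "\<epsilon> \<ge> 0") (simp_all add: max_def)
    then show "ennreal ((max \<epsilon> 0)\<^sup>2) \<le> ennreal (\<epsilon>\<^sup>2)" by (rule ennreal_leI)
  qed simp
  finally show ?thesis using A by (simp add: h_def)
qed

lemma sum_ind_card: "finite F \<Longrightarrow> (\<Sum>c\<in>F. (indicator W c :: ennreal)) = of_nat (card (F \<inter> W))"
proof (induction F rule: finite_induct)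
  case (insert x F)
  then have fi: "finite (F \<inter> W)" by simp
  have nx: "x \<notin> F \<inter> W" using insert by simp
  show ?case
  proof (cases "x \<in> W")
    case True
    then have "insert x F \<inter> W = insert x (F \<inter> W)" by blast
    then show ?thesis using insert True fi nx by (simp add: card_insert_disjoint)
  next
    case False
    then have "insert x F \<inter> W = F \<inter> W" by blast
    then show ?thesis using insert False by simp
  qed
qed simp

lemma ind_meas:
  assumes [measurable]: "A \<in> sets \<mu>" "g \<in> borel_measurable \<mu>"
  shows "(\<lambda>x. indicator A x * g x :: ennreal) \<in> borel_measurable \<mu>"
  by measurable

lemma tail_bound:
  assumes \<delta>: "\<delta> > 0"
  shows "\<exists>R. \<forall>f\<in>L2 \<mu>. Q (mult_ind (- cball z R) (T f)) \<le> ennreal \<delta> * Q f"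
proof -
  obtain r where r: "r > 0" and ctrlr: "\<forall>F G. closed F \<longrightarrow> closed G \<longrightarrow> setdist F G > r \<longrightarrow>
        (\<forall>f\<in>L2 \<mu>. AE x in \<mu>. mult_ind F (T (mult_ind G f)) x = 0)"
    using ctrl unfolding controlled_op_def by blast
  define \<rho> where "\<rho> = r + 2"
  have u: "(SUP x. emeasure \<mu> (cball x (\<rho>+1/2))) < \<infinity>" using r by (intro unif) (simp add: \<rho>_def)
  obtain Mr where Mr: "Mr \<ge> 0" "\<forall>(y::'a) (F::'a set). finite F \<longrightarrow> (\<forall>a\<in>F. \<forall>b\<in>F. a\<noteq>b \<longrightarrow> dist a b > 1) \<longrightarrow>
            (\<forall>c\<in>F. dist c y < \<rho>) \<longrightarrow> real (card F) \<le> Mr"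
    using mult_bound[OF borel u inf_pos] by blast
  define \<epsilon> where "\<epsilon> = sqrt (\<delta> / (Mr + 1))"
  have epos: "\<epsilon> > 0" using \<delta> Mr(1) by (simp add: \<epsilon>_def)
  have e2: "\<epsilon>\<^sup>2 = \<delta> / (Mr + 1)" using \<delta> Mr(1) by (simp add: \<epsilon>_def)
  have e2M: "\<epsilon>\<^sup>2 * Mr \<le> \<delta>"
  proof -
    have "\<epsilon>\<^sup>2 * Mr = \<delta> * (Mr / (Mr + 1))" using e2 by simp
    also have "\<dots> \<le> \<delta> * 1" using \<delta> Mr(1) by (intro mult_left_mono) simp_all
    finally show ?thesis by simp
  qed
  obtain K where K: "compact K" "\<And>x. x \<notin> K \<Longrightarrow> op_norm \<mu> (\<lambda>f. mult_ind (cball x 1) (T f)) < \<epsilon>"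
    using decay epos by blast
  obtain R where R: "R > 0" "K \<subseteq> ball z R"
    using bounded_subset_ballD[OF compact_imp_bounded[OF K(1)]] by blast
  show ?thesis
  proof (intro exI[of _ R] ballI)
    fix f assume f: "f \<in> L2 \<mu>"
    have fm[measurable]: "f \<in> borel_measurable \<mu>" using f by (rule L2_meas)
    have Tfm[measurable]: "T f \<in> borel_measurable \<mu>" using f by (intro L2_meas T_L2)
    define gT where "gT x = ennreal ((cmod (T f x))\<^sup>2)" for x
    define gf where "gf x = ennreal ((cmod (f x))\<^sup>2)" for x
    have gTm[measurable]: "gT \<in> borel_measurable \<mu>" unfolding gT_def by measurable
    have gfm[measurable]: "gf \<in> borel_measurable \<mu>" unfolding gf_def by measurable
    have loc: "(\<integral>\<^sup>+x. indicator (cball c 1) x * gT x \<partial>\<mu>) \<le> ennreal (\<epsilon>\<^sup>2) * (\<integral>\<^sup>+x. indicator (ball c \<rho>) x * gf x \<partial>\<mu>)"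
      if c: "c \<notin> ball z R" for c
    proof -
      have "c \<notin> K" using c R by blast
      then have "Q (mult_ind (cball c 1) (T f)) \<le> ennreal (\<epsilon>\<^sup>2) * Q (mult_ind (ball c (r+2)) f)"
        by (intro local_est[OF r ctrlr] K(2) f)
      moreover have "Q (mult_ind (cball c 1) (T f)) = (\<integral>\<^sup>+x. indicator (cball c 1) x * gT x \<partial>\<mu>)"
        unfolding gT_def by (rule Q_mult_ind, rule closed_sets, simp)
      moreover have "Q (mult_ind (ball c (r+2)) f) = (\<integral>\<^sup>+x. indicator (ball c \<rho>) x * gf x \<partial>\<mu>)"
        unfolding gf_def \<rho>_def by (rule Q_mult_ind, rule open_sets, simp)
      ultimately show ?thesis by (simp only:)
    qed
    define Cn where "Cn n = cball z (real n) \<inter> - ball z R" for n :: nat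
    have Cn_sets[measurable]: "Cn n \<in> sets \<mu>" for n
      unfolding Cn_def by (intro closed_sets closed_Int closed_cball closed_Compl open_ball)
    have step: "(\<integral>\<^sup>+x. indicator (Cn n) x * gT x \<partial>\<mu>) \<le> ennreal \<delta> * Q f" for n
    proof -
      have "compact (Cn n)" unfolding Cn_def
        using proper[of z "real n"] by (intro compact_Int_closed closed_Compl open_ball)
      then obtain F where F: "finite F" "F \<subseteq> Cn n" "\<forall>a\<in>F. \<forall>b\<in>F. a \<noteq> b \<longrightarrow> dist a b > 1"
        "Cn n \<subseteq> (\<Union>c\<in>F. cball c 1)"
        using sep_cover[OF \<open>compact (Cn n)\<close>] by blast
      have "(\<integral>\<^sup>+x. indicator (Cn n) x * gT x \<partial>\<mu>) \<le> (\<integral>\<^sup>+x. (\<Sum>c\<in>F. indicator (cball c 1) x * gT x) \<partial>\<mu>)"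
      proof (rule nn_integral_mono)
        fix x
        show "indicator (Cn n) x * gT x \<le> (\<Sum>c\<in>F. indicator (cball c 1) x * gT x)"
        proof (cases "x \<in> Cn n")
          case True
          then obtain c where c: "c \<in> F" "x \<in> cball c 1" using F(4) by blast
          have "indicator (Cn n) x * gT x = indicator (cball c 1) x * gT x" using True c by simp
          also have "\<dots> \<le> (\<Sum>c\<in>F. indicator (cball c 1) x * gT x)"
            by (rule member_le_sum[OF c(1) _ F(1)]) simp
          finally show ?thesis .
        qed simp
      qed
      also have "\<dots> = (\<Sum>c\<in>F. (\<integral>\<^sup>+x. indicator (cball c 1) x * gT x \<partial>\<mu>))"
        by (rule nn_integral_sum) (rule ind_meas[OF closed_sets gTm], simp)
      also have "\<dots> \<le> (\<Sum>c\<in>F. ennreal (\<epsilon>\<^sup>2) * (\<integral>\<^sup>+x. indicator (ball c \<rho>) x * gf x \<partial>\<mu>))"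
      proof (rule sum_mono)
        fix c assume "c \<in> F"
        then have "c \<notin> ball z R" using F(2) by (auto simp: Cn_def)
        then show "(\<integral>\<^sup>+x. indicator (cball c 1) x * gT x \<partial>\<mu>) \<le> ennreal (\<epsilon>\<^sup>2) * (\<integral>\<^sup>+x. indicator (ball c \<rho>) x * gf x \<partial>\<mu>)"
          by (rule loc)
      qed
      also have "\<dots> = ennreal (\<epsilon>\<^sup>2) * (\<integral>\<^sup>+x. (\<Sum>c\<in>F. indicator (ball c \<rho>) x * gf x) \<partial>\<mu>)"
        by (subst nn_integral_sum) (rule ind_meas[OF open_sets gfm], simp, simp add: sum_distrib_left)
      also have "\<dots> \<le> ennreal (\<epsilon>\<^sup>2) * (\<integral>\<^sup>+x. ennreal Mr * gf x \<partial>\<mu>)"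
      proof (intro mult_left_mono nn_integral_mono)
        fix x
        have "(\<Sum>c\<in>F. indicator (ball c \<rho>) x * gf x) = (\<Sum>c\<in>F. indicator {c. dist c x < \<rho>} c) * gf x"
          by (simp add: sum_distrib_right indicator_def)
        also have "(\<Sum>c\<in>F. (indicator {c. dist c x < \<rho>} c :: ennreal)) = of_nat (card (F \<inter> {c. dist c x < \<rho>}))"
          by (rule sum_ind_card[OF F(1)])
        also have "of_nat (card (F \<inter> {c. dist c x < \<rho>})) \<le> ennreal Mr"
        proof -
          have fin': "finite (F \<inter> {c. dist c x < \<rho>})" using F(1) by simp
          have sep': "\<forall>a\<in>F \<inter> {c. dist c x < \<rho>}. \<forall>b\<in>F \<inter> {c. dist c x < \<rho>}. a\<noteq>b \<longrightarrow> dist a b > 1"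
            using F(3) by blast
          have near': "\<forall>c\<in>F \<inter> {c. dist c x < \<rho>}. dist c x < \<rho>" by blast
          have "real (card (F \<inter> {c. dist c x < \<rho>})) \<le> Mr"
            using Mr(2)[THEN spec[of _ x], THEN spec[of _ "F \<inter> {c. dist c x < \<rho>}"]] fin' sep' near' by blast
          then show ?thesis by (simp add: ennreal_of_nat_eq_real_of_nat ennreal_leI)
        qed
        finally show "(\<Sum>c\<in>F. indicator (ball c \<rho>) x * gf x) \<le> ennreal Mr * gf x"
          by (simp add: mult_right_mono)
      qed simp
      also have "\<dots> = ennreal (\<epsilon>\<^sup>2 * Mr) * Q f"
        using Mr(1) by (simp add: nn_integral_cmult Q_def gf_def ennreal_mult mult.assoc)
      also have "\<dots> \<le> ennreal \<delta> * Q f"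
        by (intro mult_right_mono ennreal_leI e2M) simp
      finally show ?thesis .
    qed
    have "Q (mult_ind (- cball z R) (T f)) = (\<integral>\<^sup>+x. indicator (- cball z R) x * gT x \<partial>\<mu>)"
      unfolding gT_def by (rule Q_mult_ind, rule open_sets, rule open_Compl, rule closed_cball)
    also have "\<dots> \<le> (\<integral>\<^sup>+x. (SUP n. indicator (Cn n) x * gT x) \<partial>\<mu>)"
    proof (rule nn_integral_mono)
      fix x
      show "indicator (- cball z R) x * gT x \<le> (SUP n. indicator (Cn n) x * gT x)"
      proof (cases "x \<in> cball z R")
        case False
        obtain n :: nat where n: "dist z x \<le> real n" using real_arch_simple by blast
        then have "x \<in> Cn n" using False by (auto simp: Cn_def)
        then have "indicator (- cball z R) x * gT x = indicator (Cn n) x * gT x" using False by simp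
        also have "\<dots> \<le> (SUP n. indicator (Cn n) x * gT x)" by (rule SUP_upper) simp
        finally show ?thesis .
      qed simp
    qed
    also have "\<dots> = (SUP n. (\<integral>\<^sup>+x. indicator (Cn n) x * gT x \<partial>\<mu>))"
    proof (rule nn_integral_monotone_convergence_SUP)
      show "incseq (\<lambda>n x. indicator (Cn n) x * gT x)"
      proof (rule incseq_SucI, rule le_funI)
        fix n x
        have "Cn n \<subseteq> Cn (Suc n)" unfolding Cn_def by (intro Int_mono subset_cball order_refl) simp
        then show "indicator (Cn n) x * gT x \<le> indicator (Cn (Suc n)) x * gT x"
          by (intro mult_right_mono) (auto simp: indicator_def)
      qed
    qed measurable
    also have "\<dots> \<le> ennreal \<delta> * Q f" by (rule SUP_least) (rule step)
    finally show "Q (mult_ind (- cball z R) (T f)) \<le> ennreal \<delta> * Q f" .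
  qed
qed

end



context S2 begin

lemma Q_zero_AE:
  assumes [measurable]: "u \<in> borel_measurable \<mu>" and q: "Q u = 0"
  shows "AE x in \<mu>. u x = 0"
proof -
  have "(\<lambda>x. ennreal ((cmod (u x))\<^sup>2)) \<in> borel_measurable \<mu>" by measurable
  then have "AE x in \<mu>. ennreal ((cmod (u x))\<^sup>2) = 0"
    using q unfolding Q_def by (simp add: nn_integral_0_iff_AE)
  then show ?thesis by eventually_elim simp
qed

lemma tendsto_L2norm:
  assumes m: "\<And>n. h n \<in> borel_measurable \<mu>" and q: "(\<lambda>n. Q (h n)) \<longlonglongrightarrow> 0"
  shows "(\<lambda>n. L2norm \<mu> (h n)) \<longlonglongrightarrow> 0"
proof -
  have "(\<lambda>n. Q (h n)) \<longlonglongrightarrow> ennreal 0" using q by simp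
  then have "(\<lambda>n. enn2real (Q (h n))) \<longlonglongrightarrow> 0" by (rule tendsto_enn2real) simp
  then have "(\<lambda>n. sqrt (enn2real (Q (h n)))) \<longlonglongrightarrow> sqrt 0" by (rule tendsto_real_sqrt)
  then show ?thesis using m by (simp add: L2norm_Q)
qed

lemma Q_tendsto:
  assumes m: "\<And>n. h n \<in> L2 \<mu>" and q: "(\<lambda>n. L2norm \<mu> (h n)) \<longlonglongrightarrow> 0"
  shows "(\<lambda>n. Q (h n)) \<longlonglongrightarrow> 0"
proof -
  have "(\<lambda>n. (L2norm \<mu> (h n))\<^sup>2) \<longlonglongrightarrow> 0\<^sup>2" using q by (rule tendsto_power)
  then have "(\<lambda>n. ennreal ((L2norm \<mu> (h n))\<^sup>2)) \<longlonglongrightarrow> ennreal (0\<^sup>2)" by (rule tendsto_ennrealI)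
  then show ?thesis using m by (simp add: Q_L2norm)
qed

lemma dist_meas: "(\<lambda>y. nat \<lceil>dist z y\<rceil>) \<in> measurable \<mu> (count_space UNIV)"
proof -
  have [measurable]: "(\<lambda>y. dist z y) \<in> borel_measurable \<mu>"
    unfolding meas_borel_iff by (intro borel_measurable_continuous_onI continuous_intros)
  show ?thesis by measurable
qed

lemma Q_sym: "Q (\<lambda>x. f x - g x) = Q (\<lambda>x. g x - f x)"
  unfolding Q_def by (simp add: norm_minus_commute)

lemma two_enn: "0 \<le> x \<Longrightarrow> 2 * ennreal x = ennreal (2 * x)"
  by (simp add: ennreal_mult)

lemma main:
  assumes lc: "locally_compact_op \<mu> T"
  shows "compact_op \<mu> T"
  unfolding compact_op_def
proof (intro allI impI)
  fix s :: "nat \<Rightarrow> 'a \<Rightarrow> complex" assume s: "\<forall>n. s n \<in> L2 \<mu> \<and> L2norm \<mu> (s n) \<le> 1"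
  have sL2: "s n \<in> L2 \<mu>" for n using s by simp
  have sQ: "Q (s n) \<le> 1" for n
  proof -
    have "(L2norm \<mu> (s n))\<^sup>2 \<le> 1\<^sup>2" using s by (intro power_mono) (auto simp: L2norm_nonneg)
    then show ?thesis using sL2[of n] by (simp add: Q_L2norm)
  qed
  obtain C where C: "C \<ge> 0" "\<forall>f\<in>L2 \<mu>. L2norm \<mu> (T f) \<le> C * L2norm \<mu> f"
    using T_boundL by blast
  have TsQ: "Q (T (s n)) \<le> ennreal (C\<^sup>2)" for n
  proof -
    have "L2norm \<mu> (T (s n)) \<le> C * L2norm \<mu> (s n)" using C sL2 by blast
    also have "\<dots> \<le> C" using C(1) s by (simp add: mult_left_le)
    finally have "(L2norm \<mu> (T (s n)))\<^sup>2 \<le> C\<^sup>2" by (intro power_mono) (auto simp: L2norm_nonneg)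
    then show ?thesis using T_L2[OF sL2[of n]] by (simp add: Q_L2norm)
  qed
  define z where "z = (undefined::'a)"
  define L where "L j = cball z (real j)" for j :: nat
  have Lsets[measurable]: "L j \<in> sets \<mu>" for j unfolding L_def by (intro closed_sets closed_cball)
  have Lc_sets[measurable]: "- L j \<in> sets \<mu>" for j unfolding L_def by (intro open_sets open_Compl closed_cball)
  have Lmono: "i \<le> j \<Longrightarrow> L i \<subseteq> L j" for i j unfolding L_def by (intro subset_cball) simp
  have cpt: "compact_op \<mu> (\<lambda>f. mult_ind (L j) (T f))" for j
    using lc proper unfolding locally_compact_op_def L_def by blast
  define P where "P j r \<longleftrightarrow> (\<exists>g\<in>L2 \<mu>. (\<lambda>n. Q (\<lambda>x. mult_ind (L j) (T (s (r n))) x - g x)) \<longlonglongrightarrow> 0)"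
    for j and r :: "nat \<Rightarrow> nat"
  have stable: "P j (r \<circ> q)" if sq: "strict_mono q" and Pr: "P j r" for j r and q :: "nat \<Rightarrow> nat"
  proof -
    obtain g where g: "g \<in> L2 \<mu>" "(\<lambda>n. Q (\<lambda>x. mult_ind (L j) (T (s (r n))) x - g x)) \<longlonglongrightarrow> 0"
      using Pr unfolding P_def by blast
    have "((\<lambda>n. Q (\<lambda>x. mult_ind (L j) (T (s (r n))) x - g x)) \<circ> q) \<longlonglongrightarrow> 0"
      by (rule LIMSEQ_subseq_LIMSEQ[OF g(2) sq])
    then show ?thesis unfolding P_def using g(1) by (auto simp: o_def)
  qed
  have exs: "\<exists>r'. strict_mono r' \<and> P j (r0 \<circ> r')" if r0: "strict_mono r0" for j and r0 :: "nat \<Rightarrow> nat"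
  proof -
    have s0: "\<forall>n. s (r0 n) \<in> L2 \<mu> \<and> L2norm \<mu> (s (r0 n)) \<le> 1" using s by simp
    have H: "(\<forall>n. s (r0 n) \<in> L2 \<mu> \<and> L2norm \<mu> (s (r0 n)) \<le> 1) \<longrightarrow>
        (\<exists>r g. strict_mono r \<and> g \<in> L2 \<mu> \<and>
           (\<lambda>n. L2norm \<mu> (\<lambda>x. mult_ind (L j) (T (s (r0 (r n)))) x - g x)) \<longlonglongrightarrow> 0)"
      using spec[OF cpt[of j, unfolded compact_op_def], of "\<lambda>n. s (r0 n)"] by simp
    obtain r' g where rg: "strict_mono r'" "g \<in> L2 \<mu>"
      "(\<lambda>n. L2norm \<mu> (\<lambda>x. mult_ind (L j) (T (s (r0 (r' n)))) x - g x)) \<longlonglongrightarrow> 0"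
      using mp[OF H s0] by blast
    have "(\<lambda>n. Q (\<lambda>x. mult_ind (L j) (T (s (r0 (r' n)))) x - g x)) \<longlonglongrightarrow> 0"
      by (rule Q_tendsto[OF _ rg(3)]) (intro L2_diff mult_ind_L2 Lsets T_L2 sL2 rg(2))
    then have "P j (r0 \<circ> r')" unfolding P_def using rg(2) by auto
    then show ?thesis using rg(1) by blast
  qed
  interpret ss: subseqs P by unfold_locales (rule exs)
  define \<sigma> where "\<sigma> = ss.diagseq"
  have \<sigma>mono: "strict_mono \<sigma>" unfolding \<sigma>_def by (rule ss.subseq_diagseq)
  define hT where "hT n = T (s (\<sigma> n))" for n
  have hTL2: "hT n \<in> L2 \<mu>" for n unfolding hT_def by (intro T_L2 sL2)
  have hTm[measurable]: "hT n \<in> borel_measurable \<mu>" for n by (rule L2_meas[OF hTL2])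
  have exG: "\<exists>g. g \<in> L2 \<mu> \<and> (\<lambda>n. Q (\<lambda>x. mult_ind (L j) (hT n) x - g x)) \<longlonglongrightarrow> 0" for j
  proof -
    have "P j (ss.diagseq \<circ> ((+) (Suc j)))" by (rule ss.diagseq_holds) (rule stable)
    then obtain g where g: "g \<in> L2 \<mu>"
      "(\<lambda>n. Q (\<lambda>x. mult_ind (L j) (T (s ((ss.diagseq \<circ> ((+) (Suc j))) n))) x - g x)) \<longlonglongrightarrow> 0"
      unfolding P_def by blast
    have "(\<lambda>n. Q (\<lambda>x. mult_ind (L j) (hT (n + Suc j)) x - g x)) \<longlonglongrightarrow> 0"
      using g(2) by (simp add: hT_def \<sigma>_def o_def add.commute)
    then have "(\<lambda>n. Q (\<lambda>x. mult_ind (L j) (hT n) x - g x)) \<longlonglongrightarrow> 0" by (rule LIMSEQ_offset)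
    then show ?thesis using g(1) by blast
  qed
  obtain G where G: "\<And>j. G j \<in> L2 \<mu>" "\<And>j. (\<lambda>n. Q (\<lambda>x. mult_ind (L j) (hT n) x - G j x)) \<longlonglongrightarrow> 0"
    using exG by metis
  have Gm[measurable]: "G j \<in> borel_measurable \<mu>" for j by (rule L2_meas[OF G(1)])
  have lim2: "(\<lambda>n. 2 * a n + 2 * b n :: ennreal) \<longlonglongrightarrow> 0" if "a \<longlonglongrightarrow> 0" "b \<longlonglongrightarrow> 0" for a b
  proof -
    have "(\<lambda>n. 2 * a n + 2 * b n :: ennreal) \<longlonglongrightarrow> 2 * 0 + 2 * 0"
      by (intro tendsto_add ennreal_tendsto_cmult that) simp_all
    then show ?thesis by simp
  qed
  have cons: "AE x in \<mu>. indicator (L i) x * G j x = G i x" if ij: "i \<le> j" for i j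
  proof -
    define u where "u x = indicator (L i) x * G j x - G i x" for x
    have um[measurable]: "u \<in> borel_measurable \<mu>" unfolding u_def by measurable
    have bnd: "Q u \<le> 2 * Q (\<lambda>x. mult_ind (L j) (hT n) x - G j x) + 2 * Q (\<lambda>x. mult_ind (L i) (hT n) x - G i x)" for n
    proof -
      have eq: "u = (\<lambda>x. mult_ind (L i) (\<lambda>x. G j x - mult_ind (L j) (hT n) x) x + (mult_ind (L i) (hT n) x - G i x))"
        using Lmono[OF ij] by (auto simp: u_def mult_ind_def indicator_def fun_eq_iff algebra_simps)
      have m1: "mult_ind (L i) (\<lambda>x. G j x - mult_ind (L j) (hT n) x) \<in> borel_measurable \<mu>"
        unfolding mult_ind_def by measurable
      have m2: "(\<lambda>x. mult_ind (L i) (hT n) x - G i x) \<in> borel_measurable \<mu>"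
        unfolding mult_ind_def by measurable
      have "Q u \<le> 2 * Q (mult_ind (L i) (\<lambda>x. G j x - mult_ind (L j) (hT n) x)) + 2 * Q (\<lambda>x. mult_ind (L i) (hT n) x - G i x)"
        unfolding eq by (rule Q_add_le[OF m1 m2])
      also have "Q (mult_ind (L i) (\<lambda>x. G j x - mult_ind (L j) (hT n) x)) \<le> Q (\<lambda>x. mult_ind (L j) (hT n) x - G j x)"
        using Q_mult_ind_le[of "L i" "\<lambda>x. G j x - mult_ind (L j) (hT n) x"] Q_sym[of "G j" "mult_ind (L j) (hT n)"]
        by simp
      finally show ?thesis by (simp add: add_right_mono mult_left_mono)
    qed
    have "(\<lambda>n. 2 * Q (\<lambda>x. mult_ind (L j) (hT n) x - G j x) + 2 * Q (\<lambda>x. mult_ind (L i) (hT n) x - G i x)) \<longlonglongrightarrow> 0"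
      by (rule lim2[OF G(2) G(2)])
    then have "Q u \<le> 0" by (rule tendsto_lowerbound) (simp_all add: bnd)
    then have "Q u = 0" by simp
    then have "AE x in \<mu>. u x = 0" by (intro Q_zero_AE um)
    then show ?thesis by eventually_elim (simp add: u_def)
  qed
  have allcons: "AE x in \<mu>. \<forall>i j. i \<le> j \<longrightarrow> indicator (L i) x * G j x = G i x"
  proof -
    have "\<forall>i j. AE x in \<mu>. i \<le> j \<longrightarrow> indicator (L i) x * G j x = G i x"
    proof (intro allI)
      fix i j :: nat
      show "AE x in \<mu>. i \<le> j \<longrightarrow> indicator (L i) x * G j x = G i x"
      proof (cases "i \<le> j")
        case True
        with cons[OF True] show ?thesis by simp
      qed simp
    qed
    then show ?thesis by (simp add: AE_all_countable)
  qed
  define k where "k y = nat \<lceil>dist z y\<rceil>" for y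
  define g where "g y = G (k y) y" for y
  have gm[measurable]: "g \<in> borel_measurable \<mu>"
    unfolding g_def k_def by (rule measurable_compose_countable[OF Gm dist_meas])
  have kL: "y \<in> L (k y)" for y
  proof -
    have "dist z y \<le> real_of_int \<lceil>dist z y\<rceil>" by (rule le_of_int_ceiling)
    then show ?thesis by (simp add: L_def k_def)
  qed
  have kle: "k y \<le> j" if "y \<in> L j" for y j
  proof -
    have "dist z y \<le> real j" using that by (simp add: L_def)
    then have "\<lceil>dist z y\<rceil> \<le> int j" by (simp add: ceiling_le_iff)
    then show ?thesis by (simp add: k_def nat_le_iff)
  qed
  have gL: "AE y in \<mu>. mult_ind (L j) g y = G j y" for j
    using allcons
  proof eventually_elim
    case (elim y)
    show ?case
    proof (cases "y \<in> L j")
      case True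
      have "g y = indicator (L (k y)) y * G j y" using elim kle[OF True] by (simp add: g_def)
      also have "\<dots> = G j y" using kL[of y] by simp
      finally show ?thesis using True by (simp add: mult_ind_def)
    next
      case False
      have "G j y = indicator (L j) y * G j y" using elim by simp
      then show ?thesis using False by (simp add: mult_ind_def)
    qed
  qed
  have hTQ: "Q (hT n) \<le> ennreal (C\<^sup>2)" for n unfolding hT_def by (rule TsQ)
  have QG: "Q (G j) \<le> ennreal (2 * C\<^sup>2)" for j
  proof -
    have bnd: "Q (G j) \<le> 2 * ennreal (C\<^sup>2) + 2 * Q (\<lambda>x. mult_ind (L j) (hT n) x - G j x)" for n
    proof -
      have eq: "G j = (\<lambda>x. mult_ind (L j) (hT n) x - (mult_ind (L j) (hT n) x - G j x))" by simp
      have m1: "mult_ind (L j) (hT n) \<in> borel_measurable \<mu>" unfolding mult_ind_def by measurable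
      have m2: "(\<lambda>x. mult_ind (L j) (hT n) x - G j x) \<in> borel_measurable \<mu>" unfolding mult_ind_def by measurable
      have "Q (G j) \<le> 2 * Q (mult_ind (L j) (hT n)) + 2 * Q (\<lambda>x. mult_ind (L j) (hT n) x - G j x)"
        by (subst eq) (rule Q_diff_le[OF m1 m2])
      also have "Q (mult_ind (L j) (hT n)) \<le> ennreal (C\<^sup>2)"
        using Q_mult_ind_le[of "L j" "hT n"] hTQ[of n] by (rule order_trans)
      finally show ?thesis by (simp add: add_right_mono mult_left_mono)
    qed
    have "(\<lambda>n. 2 * ennreal (C\<^sup>2) + 2 * Q (\<lambda>x. mult_ind (L j) (hT n) x - G j x)) \<longlonglongrightarrow> 2 * ennreal (C\<^sup>2) + 2 * 0"
      by (intro tendsto_add tendsto_const ennreal_tendsto_cmult G(2)) simp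
    then have "Q (G j) \<le> 2 * ennreal (C\<^sup>2) + 2 * 0" by (rule tendsto_lowerbound) (simp_all add: bnd)
    then show ?thesis by (simp add: two_enn)
  qed
  have QLg: "Q (mult_ind (L j) g) = Q (G j)" for j by (rule Q_cong_AE[OF gL])
  have incL: "incseq (\<lambda>j. Q (mult_ind (L j) g))"
  proof (rule incseq_SucI)
    fix j
    show "Q (mult_ind (L j) g) \<le> Q (mult_ind (L (Suc j)) g)"
      using Lmono[of j "Suc j"] by (intro Q_mono) (auto simp: mult_ind_def indicator_def)
  qed
  have Qg: "Q g = (SUP j. Q (mult_ind (L j) g))"
  proof -
    have "Q g = (\<integral>\<^sup>+x. (SUP j. indicator (L j) x * ennreal ((cmod (g x))\<^sup>2)) \<partial>\<mu>)"
      unfolding Q_def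
    proof (rule nn_integral_cong)
      fix y
      show "ennreal ((cmod (g y))\<^sup>2) = (SUP j. indicator (L j) y * ennreal ((cmod (g y))\<^sup>2))"
      proof (rule antisym)
        have "ennreal ((cmod (g y))\<^sup>2) = indicator (L (k y)) y * ennreal ((cmod (g y))\<^sup>2)"
          using kL[of y] by simp
        also have "\<dots> \<le> (SUP j. indicator (L j) y * ennreal ((cmod (g y))\<^sup>2))" by (rule SUP_upper) simp
        finally show "ennreal ((cmod (g y))\<^sup>2) \<le> (SUP j. indicator (L j) y * ennreal ((cmod (g y))\<^sup>2))" .
        show "(SUP j. indicator (L j) y * ennreal ((cmod (g y))\<^sup>2)) \<le> ennreal ((cmod (g y))\<^sup>2)"
          by (rule SUP_least) (simp add: indicator_def)
      qed
    qed
    also have "\<dots> = (SUP j. (\<integral>\<^sup>+x. indicator (L j) x * ennreal ((cmod (g x))\<^sup>2) \<partial>\<mu>))"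
    proof (rule nn_integral_monotone_convergence_SUP)
      show "incseq (\<lambda>j x. indicator (L j) x * ennreal ((cmod (g x))\<^sup>2))"
      proof (rule incseq_SucI, rule le_funI)
        fix j x
        show "indicator (L j) x * ennreal ((cmod (g x))\<^sup>2) \<le> indicator (L (Suc j)) x * ennreal ((cmod (g x))\<^sup>2)"
          using Lmono[of j "Suc j"] by (intro mult_right_mono) (auto simp: indicator_def)
      qed
    qed measurable
    also have "\<dots> = (SUP j. Q (mult_ind (L j) g))" by (simp add: Q_mult_ind)
    finally show ?thesis .
  qed
  have Qgb: "Q g \<le> ennreal (2 * C\<^sup>2)" unfolding Qg by (rule SUP_least) (simp add: QLg QG)
  have gL2: "g \<in> L2 \<mu>" using Qgb by (simp add: L2_iff order.strict_trans1)
  have Qgfin: "Q g \<noteq> top" using gL2 by (simp add: L2_iff)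
  have tail: "(\<lambda>j. Q (mult_ind (- L j) g)) \<longlonglongrightarrow> 0"
  proof -
    have l1: "(\<lambda>j. Q (mult_ind (L j) g)) \<longlonglongrightarrow> Q g" unfolding Qg by (rule LIMSEQ_SUP[OF incL])
    have fin: "Q (mult_ind (L j) g) \<noteq> top" for j
      using Q_mult_ind_le[of "L j" g] Qgfin by (auto simp: top_unique)
    have eq: "Q (mult_ind (- L j) g) = Q g - Q (mult_ind (L j) g)" for j
      using Q_split[OF Lsets[of j] gm] fin[of j] by simp
    have "(\<lambda>j. Q g - Q (mult_ind (L j) g)) \<longlonglongrightarrow> Q g - Q g"
      by (rule tendsto_diff_ennreal[OF tendsto_const l1 Qgfin Qgfin])
    moreover have "Q g - Q g = 0" using ennreal_add_diff_cancel_left[OF Qgfin, of 0] by simp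
    ultimately show ?thesis by (simp add: eq)
  qed
  have main: "(\<lambda>n. Q (\<lambda>x. hT n x - g x)) \<longlonglongrightarrow> 0"
  proof (rule tendsto_zero_ennreal)
    fix e :: real assume e: "0 < e"
    obtain R where R: "\<forall>f\<in>L2 \<mu>. Q (mult_ind (- cball z R) (T f)) \<le> ennreal (e/8) * Q f"
      using tail_bound[of "e/8" z] e by auto
    have "eventually (\<lambda>j. Q (mult_ind (- L j) g) < ennreal (e/8)) sequentially"
      using e by (intro order_tendstoD(2)[OF tail]) simp
    then obtain N where N: "\<And>j. j \<ge> N \<Longrightarrow> Q (mult_ind (- L j) g) < ennreal (e/8)"
      unfolding eventually_sequentially by blast
    define j where "j = max N (nat \<lceil>R\<rceil>)"
    have jR: "R \<le> real j"
    proof -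
      have "R \<le> real (nat \<lceil>R\<rceil>)" by linarith
      also have "\<dots> \<le> real j" by (simp add: j_def)
      finally show ?thesis .
    qed
    have tj: "Q (mult_ind (- L j) g) \<le> ennreal (e/8)" using N[of j] by (simp add: j_def)
    have sub: "- L j \<subseteq> - cball z R" using jR unfolding L_def Compl_subset_Compl_iff by (intro subset_cball)
    have "eventually (\<lambda>n. Q (\<lambda>x. mult_ind (L j) (hT n) x - G j x) < ennreal (e/4)) sequentially"
      using e by (intro order_tendstoD(2)[OF G(2)]) simp
    then show "eventually (\<lambda>n. Q (\<lambda>x. hT n x - g x) < ennreal e) sequentially"
    proof eventually_elim
      case (elim n)
      have dm: "(\<lambda>x. hT n x - g x) \<in> borel_measurable \<mu>" by measurable
      have p1: "Q (mult_ind (L j) (\<lambda>x. hT n x - g x)) = Q (\<lambda>x. mult_ind (L j) (hT n) x - G j x)"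
        using gL[of j]
      proof (intro Q_cong_AE, eventually_elim)
        case (elim y)
        then show ?case by (simp add: mult_ind_def right_diff_distrib)
      qed
      have p2: "mult_ind (- L j) (\<lambda>x. hT n x - g x) = (\<lambda>x. mult_ind (- L j) (hT n) x - mult_ind (- L j) g x)"
        by (simp add: mult_ind_def right_diff_distrib)
      have m1: "mult_ind (- L j) (hT n) \<in> borel_measurable \<mu>" unfolding mult_ind_def by measurable
      have m2: "mult_ind (- L j) g \<in> borel_measurable \<mu>" unfolding mult_ind_def by measurable
      have t1: "Q (mult_ind (- L j) (hT n)) \<le> ennreal (e/8)"
      proof -
        have "Q (mult_ind (- L j) (hT n)) \<le> Q (mult_ind (- cball z R) (T (s (\<sigma> n))))"
          using sub unfolding hT_def by (intro Q_mono) (auto simp: mult_ind_def indicator_def)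
        also have "\<dots> \<le> ennreal (e/8) * Q (s (\<sigma> n))" using R sL2 by blast
        also have "\<dots> \<le> ennreal (e/8) * 1" by (intro mult_left_mono sQ) simp
        finally show ?thesis by simp
      qed
      have "Q (\<lambda>x. hT n x - g x) = Q (mult_ind (L j) (\<lambda>x. hT n x - g x)) + Q (mult_ind (- L j) (\<lambda>x. hT n x - g x))"
        by (rule Q_split[OF Lsets dm])
      also have "\<dots> \<le> ennreal (e/4) + (2 * ennreal (e/8) + 2 * ennreal (e/8))"
      proof (rule add_mono)
        show "Q (mult_ind (L j) (\<lambda>x. hT n x - g x)) \<le> ennreal (e/4)" using p1 elim by simp
        have "Q (mult_ind (- L j) (\<lambda>x. hT n x - g x)) \<le> 2 * Q (mult_ind (- L j) (hT n)) + 2 * Q (mult_ind (- L j) g)"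
          unfolding p2 by (rule Q_diff_le[OF m1 m2])
        also have "\<dots> \<le> 2 * ennreal (e/8) + 2 * ennreal (e/8)"
          using t1 tj by (intro add_mono mult_left_mono) simp_all
        finally show "Q (mult_ind (- L j) (\<lambda>x. hT n x - g x)) \<le> 2 * ennreal (e/8) + 2 * ennreal (e/8)" .
      qed
      also have "\<dots> = ennreal (e/4) + (ennreal (2 * (e/8)) + ennreal (2 * (e/8)))"
      proof -
        have e8: "0 \<le> e/8" using e by simp
        show ?thesis by (simp only: two_enn[OF e8])
      qed
      also have "\<dots> = ennreal (e/4 + (2 * (e/8) + 2 * (e/8)))"
      proof -
        have h1: "0 \<le> 2 * (e/8)" and h3: "0 \<le> e/4" and h4: "0 \<le> 2 * (e/8) + 2 * (e/8)" using e by simp_all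
        show ?thesis by (simp only: ennreal_plus[OF h1 h1, symmetric] ennreal_plus[OF h3 h4, symmetric])
      qed
      also have "\<dots> < ennreal e" using e by (intro ennreal_lessI) simp_all
      finally show ?case .
    qed
  qed
  have "(\<lambda>n. L2norm \<mu> (\<lambda>x. hT n x - g x)) \<longlonglongrightarrow> 0"
    by (rule tendsto_L2norm[OF _ main]) measurable
  then show "\<exists>r g. strict_mono r \<and> g \<in> L2 \<mu> \<and> (\<lambda>n. L2norm \<mu> (\<lambda>x. T (s (r n)) x - g x)) \<longlonglongrightarrow> 0"
    using \<sigma>mono gL2 unfolding hT_def by blast
qed

end

theorem lemma3p8:
  fixes \<mu> :: "'a::metric_space measure"
    and T :: "('a \<Rightarrow> complex) \<Rightarrow> ('a \<Rightarrow> complex)"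
  assumes proper: "\<And>(x::'a) r. compact (cball x r)"
    and noncompact: "\<not> compact (UNIV :: 'a set)"
    and borel: "sets \<mu> = sets borel"
    and pos: "\<And>x r. r > 0 \<Longrightarrow> emeasure \<mu> (cball x r) > 0"
    and unif: "\<And>r. r > 0 \<Longrightarrow> (SUP x. emeasure \<mu> (cball x r)) < \<infinity>"
    and inf_pos: "(INF x. emeasure \<mu> (cball x (1/2))) > 0"
    and bnd: "bounded_op \<mu> T"
    and ctrl: "controlled_op \<mu> T"
    and lc: "locally_compact_op \<mu> T"
    and decay: "\<forall>\<epsilon>>0. \<exists>K. compact K \<and>
                  (\<forall>x. x \<notin> K \<longrightarrow> op_norm \<mu> (\<lambda>f. mult_ind (cball x 1) (T f)) < \<epsilon>)"
  shows "compact_op \<mu> T"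
proof -
  interpret S2 \<mu> T
  proof (unfold_locales)
    show "sets \<mu> = sets borel" by (rule borel)
    show "bounded_op \<mu> T" by (rule bnd)
    show "\<And>(x::'a) r. compact (cball x r)" by (rule proper)
    show "controlled_op \<mu> T" by (rule ctrl)
    show "\<And>r. r > 0 \<Longrightarrow> (SUP x. emeasure \<mu> (cball x r)) < \<infinity>" by (rule unif)
    show "(INF x. emeasure \<mu> (cball x (1/2))) > 0" by (rule inf_pos)
    show "\<forall>\<epsilon>>0. \<exists>K. compact K \<and>
                  (\<forall>x. x \<notin> K \<longrightarrow> op_norm \<mu> (\<lambda>f. mult_ind (cball x 1) (T f)) < \<epsilon>)" by (rule decay)
  qed
  show ?thesis by (rule main[OF lc])
qed

end
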